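(* Let $A\in\mathbb Q^{n\times n}$, $X_0\in\mathbb Q^n$ with $X_0(1)=0$, $C=[1,\mathbf 0_{n-1}]$. Define $\lambda:=\max_i\sum_{j=1}^n|A_{ij}|+1$, $P_2:=\phi_1(A)-\lambda I_{2n}$, $Y_2:=\phi_2(X_0)$, the vector $\boldsymbol\beta\in\mathbb Q^{2n}$ by $\boldsymbol\beta(2i-1)=\boldsymbol\beta(2i)=\max(0,-(P_2Y_2)(2i-1),-(P_2Y_2)(2i))$ for $1\le i\le n$, and $\gamma:=\max_i\big((P_2Y_2)(i)+\boldsymbol\beta(i)\big)$; assume $\gamma>0$. Let $$P:=\begin{bmatrix}P_2&(P_2Y_2+\boldsymbol\beta)/\gamma\\ \mathbf 0_{2n}&0\end{bmatrix}\in\mathbb Q^{(2n+1)\times(2n+1)}.$$ Then for all $t$, $Ce^{At}X_0=\gamma e^{\lambda t}\,C'e^{Pt}Y_0$ with $C'=[1,-1,\mathbf 0_{2n-1}]$ and $Y_0=[\mathbf 0_{2n},1]^T$. Moreover $P$ has nonnegative off-diagonal entries and every row sum of $P$ is $\le0$.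
   Context: $\phi_1(A)\in\mathbb Q_{\ge0}^{2n\times2n}$ is obtained from $A$ by replacing each entry $A_{ij}$ by the $2\times2$ block $\begin{bmatrix}\alpha_{ij}&\beta_{ij}\\\beta_{ij}&\alpha_{ij}\end{bmatrix}$, where $\alpha_{ij}=\max(A_{ij},0)$, $\beta_{ij}=\max(-A_{ij},0)$. $\phi_2(X)\in\mathbb Q^{2n}$ replaces each entry $X(i)$ of $X\in\mathbb Q^n$ by the two entries $X(i),0$. $\mathbf 0_m$ is the zero row vector of length $m$; $I_{2n}$ is the identity. *)

theory Defs
  imports Complex_Main "Jordan_Normal_Form.Matrix"
begin

text \<open>Matrices are JNF matrices over real with rational entries (indices 0-based).\<close>

definition mat_exp :: "real mat \<Rightarrow> real \<Rightarrow> real mat" where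
  "mat_exp A t = mat (dim_row A) (dim_col A)
     (\<lambda>(i,j). \<Sum>k. (t ^ k / fact k) * (A ^\<^sub>m k) $$ (i,j))"

text \<open>phi_1: entry a replaced by the 2x2 block [[max a 0, max (-a) 0],[max (-a) 0, max a 0]].\<close>
definition phi1 :: "real mat \<Rightarrow> real mat" where
  "phi1 A = mat (2 * dim_row A) (2 * dim_col A)
     (\<lambda>(i,j). if i mod 2 = j mod 2 then max (A $$ (i div 2, j div 2)) 0
              else max (- A $$ (i div 2, j div 2)) 0)"

definition phi2 :: "real vec \<Rightarrow> real vec" where
  "phi2 X = vec (2 * dim_vec X) (\<lambda>i. if even i then X $ (i div 2) else 0)"

definition lam :: "real mat \<Rightarrow> real" where
  "lam A = Max {(\<Sum>j<dim_col A. \<bar>A $$ (i,j)\<bar>) | i. i < dim_row A} + 1"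

definition P2_of :: "real mat \<Rightarrow> real mat" where
  "P2_of A = phi1 A - lam A \<cdot>\<^sub>m 1\<^sub>m (2 * dim_row A)"

definition beta_of :: "real mat \<Rightarrow> real vec \<Rightarrow> real vec" where
  "beta_of A X0 = (let v = P2_of A *\<^sub>v phi2 X0 in
     vec (2 * dim_vec X0) (\<lambda>i. max 0 (max (- v $ (2 * (i div 2))) (- v $ (2 * (i div 2) + 1)))))"

definition gamma_of :: "real mat \<Rightarrow> real vec \<Rightarrow> real" where
  "gamma_of A X0 = (let v = P2_of A *\<^sub>v phi2 X0; b = beta_of A X0 in
     Max {v $ i + b $ i | i. i < 2 * dim_vec X0})"

definition P_of :: "real mat \<Rightarrow> real vec \<Rightarrow> real mat" where
  "P_of A X0 = (let N = 2 * dim_vec X0; P2 = P2_of A; v = P2 *\<^sub>v phi2 X0;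
       b = beta_of A X0; g = gamma_of A X0 in
     mat (N + 1) (N + 1) (\<lambda>(i,j). if i < N \<and> j < N then P2 $$ (i,j)
        else if i < N \<and> j = N then (v $ i + b $ i) / g else 0))"

definition Y0_of :: "nat \<Rightarrow> real vec" where
  "Y0_of n = vec (2 * n + 1) (\<lambda>i. if i = 2 * n then 1 else 0)"

end

theory Submission imports Defs begin

definition itv :: "real mat \<Rightarrow> nat \<Rightarrow> real vec \<Rightarrow> real vec" where
  "itv M k x = ((\<lambda>v. M *\<^sub>v v)^^k) x"

lemma itv_0[simp]: "itv M 0 x = x" by (simp add: itv_def)
lemma itv_Suc: "itv M (Suc k) x = M *\<^sub>v itv M k x" by (simp add: itv_def)
lemma itv_Suc': "itv M (Suc k) x = itv M k (M *\<^sub>v x)" by (simp add: itv_def funpow_Suc_right del: funpow.simps)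

lemma itv_carrier: "M \<in> carrier_mat m m \<Longrightarrow> x \<in> carrier_vec m \<Longrightarrow> itv M k x \<in> carrier_vec m"
  by (induction k) (auto simp: itv_Suc)

lemma pow_itv: "M \<in> carrier_mat m m \<Longrightarrow> x \<in> carrier_vec m \<Longrightarrow> (M ^\<^sub>m k) *\<^sub>v x = itv M k x"
proof (induction k arbitrary: x)
  case 0 then show ?case by auto
next
  case (Suc k)
  have "M ^\<^sub>m Suc k *\<^sub>v x = M ^\<^sub>m k *\<^sub>v (M *\<^sub>v x)"
    using Suc.prems by (simp add: assoc_mult_mat_vec[of _ m m _ m])
  also have "\<dots> = itv M k (M *\<^sub>v x)" using Suc by auto
  finally show ?case by (simp add: itv_Suc')
qed

definition nrm :: "nat \<Rightarrow> real vec \<Rightarrow> real" where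
  "nrm m y = (\<Sum>l<m. \<bar>y $ l\<bar>)"

definition mK :: "nat \<Rightarrow> real mat \<Rightarrow> real" where
  "mK m M = (\<Sum>r<m. \<Sum>l<m. \<bar>M $$ (r,l)\<bar>)"

lemma nrm_nonneg: "nrm m y \<ge> 0" by (simp add: nrm_def sum_nonneg)
lemma mK_nonneg: "mK m M \<ge> 0" by (simp add: mK_def sum_nonneg)

lemma entry_le_nrm: "r < m \<Longrightarrow> \<bar>y $ r\<bar> \<le> nrm m y"
  unfolding nrm_def by (rule member_le_sum) auto

lemma mult_entry: "M \<in> carrier_mat m m \<Longrightarrow> y \<in> carrier_vec m \<Longrightarrow> r < m \<Longrightarrow>
   (M *\<^sub>v y) $ r = (\<Sum>l<m. M $$ (r,l) * y $ l)"
  by (auto simp: scalar_prod_def lessThan_atLeast0 intro!: sum.cong)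

lemma nrm_mult: assumes "M \<in> carrier_mat m m" "y \<in> carrier_vec m"
  shows "nrm m (M *\<^sub>v y) \<le> mK m M * nrm m y"
proof -
  have "\<bar>(M *\<^sub>v y) $ r\<bar> \<le> (\<Sum>l<m. \<bar>M $$ (r,l)\<bar>) * nrm m y" if "r < m" for r
  proof -
    have "\<bar>(M *\<^sub>v y) $ r\<bar> \<le> (\<Sum>l<m. \<bar>M $$ (r,l) * y $ l\<bar>)"
      using mult_entry[OF assms that] by (simp add: sum_abs)
    also have "\<dots> \<le> (\<Sum>l<m. \<bar>M $$ (r,l)\<bar> * nrm m y)"
      by (rule sum_mono) (auto simp: abs_mult intro!: mult_left_mono entry_le_nrm)
    finally show ?thesis by (simp add: sum_distrib_right)
  qed
  then have "nrm m (M *\<^sub>v y) \<le> (\<Sum>r<m. (\<Sum>l<m. \<bar>M $$ (r,l)\<bar>) * nrm m y)"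
    unfolding nrm_def by (intro sum_mono) auto
  then show ?thesis by (simp add: mK_def sum_distrib_right)
qed

lemma nrm_itv: assumes "M \<in> carrier_mat m m" "x \<in> carrier_vec m"
  shows "nrm m (itv M k x) \<le> mK m M ^ k * nrm m x"
proof (induction k)
  case 0 then show ?case by simp
next
  case (Suc k)
  have "nrm m (itv M (Suc k) x) \<le> mK m M * nrm m (itv M k x)"
    unfolding itv_Suc by (rule nrm_mult[OF assms(1) itv_carrier[OF assms]])
  also have "\<dots> \<le> mK m M * (mK m M ^ k * nrm m x)"
    using Suc mK_nonneg by (intro mult_left_mono) auto
  finally show ?case by (simp add: mult.assoc)
qed

lemma summable_expser: "summable (\<lambda>k. (c::real) ^ k / fact k)"
  using exp_converges[of c] by (simp add: sums_iff divide_inverse mult.commute)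

lemma summable_itv: assumes "M \<in> carrier_mat m m" "x \<in> carrier_vec m" "r < m"
  shows "summable (\<lambda>k. norm (t ^ k / fact k * itv M k x $ r))"
proof (rule summable_comparison_test'[where g = "\<lambda>k. (\<bar>t\<bar> * mK m M) ^ k / fact k * nrm m x"])
  show "summable (\<lambda>k. (\<bar>t\<bar> * mK m M) ^ k / fact k * nrm m x)"
    by (intro summable_mult2 summable_expser)
  fix k :: nat
  have "\<bar>itv M k x $ r\<bar> \<le> mK m M ^ k * nrm m x"
    using entry_le_nrm[OF assms(3)] nrm_itv[OF assms(1,2)] order_trans by blast
  then have "\<bar>t\<bar> ^ k / fact k * \<bar>itv M k x $ r\<bar> \<le> \<bar>t\<bar> ^ k / fact k * (mK m M ^ k * nrm m x)"
    by (intro mult_left_mono) auto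
  then show "norm (norm (t ^ k / fact k * itv M k x $ r)) \<le> (\<bar>t\<bar> * mK m M) ^ k / fact k * nrm m x"
    by (simp add: abs_mult power_abs power_mult_distrib)
qed

lemma mat_exp_vec: assumes "M \<in> carrier_mat m m" "x \<in> carrier_vec m" "r < m"
  shows "(mat_exp M t *\<^sub>v x) $ r = (\<Sum>k. t ^ k / fact k * itv M k x $ r)"
proof -
  have ent: "mat_exp M t $$ (r,l) = (\<Sum>k. t ^ k / fact k * (M ^\<^sub>m k *\<^sub>v unit_vec m l) $ r)" if "l < m" for l
  proof -
    have "(M ^\<^sub>m k *\<^sub>v unit_vec m l) $ r = (M ^\<^sub>m k) $$ (r,l)" for k
      using assms that pow_carrier_mat[OF assms(1), of k] by auto
    then show ?thesis using assms that by (simp add: mat_exp_def)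
  qed
  have sl: "summable (\<lambda>k. t ^ k / fact k * (M ^\<^sub>m k *\<^sub>v unit_vec m l) $ r)" if "l < m" for l
    using summable_norm_cancel[OF summable_itv[OF assms(1) _ assms(3), of "unit_vec m l" t]] that
      pow_itv[OF assms(1)] by simp
  have "(mat_exp M t *\<^sub>v x) $ r = (\<Sum>l<m. mat_exp M t $$ (r,l) * x $ l)"
    by (rule mult_entry[OF _ assms(2,3)]) (use assms in \<open>simp add: mat_exp_def\<close>)
  also have "\<dots> = (\<Sum>l<m. \<Sum>k. t ^ k / fact k * (M ^\<^sub>m k *\<^sub>v unit_vec m l) $ r * x $ l)"
  proof (intro sum.cong refl)
    fix l assume "l \<in> {..<m}"
    then show "mat_exp M t $$ (r,l) * x $ l = (\<Sum>k. t ^ k / fact k * (M ^\<^sub>m k *\<^sub>v unit_vec m l) $ r * x $ l)"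
      using ent[of l] suminf_mult2[OF sl[of l], of "x $ l"] by simp
  qed
  also have "\<dots> = (\<Sum>k. \<Sum>l<m. t ^ k / fact k * (M ^\<^sub>m k *\<^sub>v unit_vec m l) $ r * x $ l)"
    by (rule suminf_sum[symmetric]) (intro summable_mult2 sl, simp)
  also have "\<dots> = (\<Sum>k. t ^ k / fact k * itv M k x $ r)"
  proof (rule suminf_cong)
    fix k
    have "(\<Sum>l<m. t ^ k / fact k * (M ^\<^sub>m k *\<^sub>v unit_vec m l) $ r * x $ l)
        = t ^ k / fact k * (\<Sum>l<m. (M ^\<^sub>m k) $$ (r,l) * x $ l)"
      using assms pow_carrier_mat[OF assms(1), of k] by (simp add: sum_distrib_left mult.assoc)
    also have "\<dots> = t ^ k / fact k * ((M ^\<^sub>m k) *\<^sub>v x) $ r"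
      using mult_entry[OF pow_carrier_mat[OF assms(1)] assms(2,3)] by simp
    finally show "(\<Sum>l<m. t ^ k / fact k * (M ^\<^sub>m k *\<^sub>v unit_vec m l) $ r * x $ l) = t ^ k / fact k * itv M k x $ r"
      using pow_itv[OF assms(1,2)] by simp
  qed
  finally show ?thesis .
qed


lemma pascal_sum:
  fixes f :: "nat \<Rightarrow> real"
  shows "(\<Sum>i\<le>k. of_nat (k choose i) * c ^ (k - i) * f (Suc i)) + c * (\<Sum>i\<le>k. of_nat (k choose i) * c ^ (k - i) * f i)
       = (\<Sum>i\<le>Suc k. of_nat (Suc k choose i) * c ^ (Suc k - i) * f i)"
proof -
  define S where "S = (\<Sum>i\<le>Suc k. of_nat (k choose i) * c ^ (Suc k - i) * f i)"
  have S1: "S = c ^ Suc k * f 0 + (\<Sum>i\<le>k. of_nat (k choose Suc i) * c ^ (k - i) * f (Suc i))"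
    unfolding S_def by (subst sum.atMost_Suc_shift) simp
  have S2: "S = c * (\<Sum>i\<le>k. of_nat (k choose i) * c ^ (k - i) * f i)"
  proof -
    have "S = (\<Sum>i\<le>k. of_nat (k choose i) * c ^ (Suc k - i) * f i)"
      unfolding S_def by simp
    also have "\<dots> = (\<Sum>i\<le>k. c * (of_nat (k choose i) * c ^ (k - i) * f i))"
      by (intro sum.cong refl) (simp add: Suc_diff_le)
    finally show ?thesis by (simp add: sum_distrib_left)
  qed
  have "(\<Sum>i\<le>Suc k. of_nat (Suc k choose i) * c ^ (Suc k - i) * f i)
      = c ^ Suc k * f 0 + (\<Sum>i\<le>k. of_nat (Suc k choose Suc i) * c ^ (k - i) * f (Suc i))"
    by (subst sum.atMost_Suc_shift) simp
  also have "\<dots> = c ^ Suc k * f 0 + (\<Sum>i\<le>k. of_nat (k choose Suc i) * c ^ (k - i) * f (Suc i))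
       + (\<Sum>i\<le>k. of_nat (k choose i) * c ^ (k - i) * f (Suc i))"
    by (simp add: sum.distrib[symmetric] algebra_simps)
  finally show ?thesis using S1 S2 by simp
qed

lemma binom_itv:
  assumes M: "M = A - c \<cdot>\<^sub>m 1\<^sub>m m" and A: "A \<in> carrier_mat m m" and x: "x \<in> carrier_vec m"
  shows "r < m \<Longrightarrow> itv A k x $ r = (\<Sum>i\<le>k. of_nat (k choose i) * c ^ (k - i) * itv M i x $ r)"
proof (induction k arbitrary: r)
  case 0 then show ?case by simp
next
  case (Suc k)
  have Mc: "M \<in> carrier_mat m m" using M A by auto
  define y where "y = itv A k x"
  have y: "y \<in> carrier_vec m" unfolding y_def using itv_carrier[OF A x] .
  have Ment: "A $$ (r,l) = M $$ (r,l) + (if r = l then c else 0)" if "l < m" for l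
    using M A Suc.prems that by auto
  have "itv A (Suc k) x $ r = (\<Sum>l<m. A $$ (r,l) * y $ l)"
    unfolding itv_Suc y_def[symmetric] by (rule mult_entry[OF A y Suc.prems])
  also have "\<dots> = (\<Sum>l<m. M $$ (r,l) * y $ l) + c * y $ r"
  proof -
    have "(\<Sum>l<m. A $$ (r,l) * y $ l) = (\<Sum>l<m. M $$ (r,l) * y $ l + (if r = l then c * y $ l else 0))"
      by (intro sum.cong refl) (simp add: Ment algebra_simps)
    then show ?thesis using Suc.prems by (simp add: sum.distrib)
  qed
  also have "(\<Sum>l<m. M $$ (r,l) * y $ l) = (\<Sum>i\<le>k. of_nat (k choose i) * c ^ (k - i) * itv M (Suc i) x $ r)"
  proof -
    have "(\<Sum>l<m. M $$ (r,l) * y $ l) = (\<Sum>l<m. \<Sum>i\<le>k. M $$ (r,l) * (of_nat (k choose i) * c ^ (k - i) * itv M i x $ l))"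
      unfolding y_def by (intro sum.cong refl) (simp add: Suc.IH sum_distrib_left)
    also have "\<dots> = (\<Sum>i\<le>k. of_nat (k choose i) * c ^ (k - i) * (\<Sum>l<m. M $$ (r,l) * itv M i x $ l))"
      by (subst sum.swap) (simp add: sum_distrib_left algebra_simps)
    also have "\<dots> = (\<Sum>i\<le>k. of_nat (k choose i) * c ^ (k - i) * itv M (Suc i) x $ r)"
      unfolding itv_Suc using mult_entry[OF Mc itv_carrier[OF Mc x] Suc.prems] by simp
    finally show ?thesis .
  qed
  also have "y $ r = (\<Sum>i\<le>k. of_nat (k choose i) * c ^ (k - i) * itv M i x $ r)"
    unfolding y_def by (rule Suc.IH[OF Suc.prems])
  finally show ?case using pascal_sum[of k c "\<lambda>i. itv M i x $ r"] by simp
qed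


lemma exp_series_real: "exp (x::real) = (\<Sum>k. x ^ k / fact k)"
  using exp_converges[of x] by (simp add: sums_iff divide_inverse mult.commute)

lemma shift_series:
  fixes a b :: "nat \<Rightarrow> real"
  assumes ab: "\<And>k. a k = (\<Sum>i\<le>k. of_nat (k choose i) * c ^ (k - i) * b i)"
    and sb: "summable (\<lambda>k. norm (t ^ k / fact k * b k))"
  shows "(\<Sum>k. t ^ k / fact k * a k) = (\<Sum>k. t ^ k / fact k * b k) * exp (c * t)"
proof -
  have se: "summable (\<lambda>k. norm ((c * t) ^ k / fact k))"
    using summable_expser[of "\<bar>c * t\<bar>"] by (simp add: power_abs)
  have "(\<Sum>k. t ^ k / fact k * b k) * exp (c * t)
     = (\<Sum>k. \<Sum>i\<le>k. t ^ i / fact i * b i * ((c * t) ^ (k - i) / fact (k - i)))"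
    unfolding exp_series_real[of "c*t"] by (rule Cauchy_product[OF sb se])
  also have "\<dots> = (\<Sum>k. t ^ k / fact k * a k)"
  proof (rule suminf_cong)
    fix k
    have "t ^ i / fact i * b i * ((c * t) ^ (k - i) / fact (k - i))
        = t ^ k / fact k * (of_nat (k choose i) * c ^ (k - i) * b i)" if "i \<le> k" for i
    proof -
      have tk: "t ^ k = t ^ i * t ^ (k - i)" using that by (simp add: power_add[symmetric])
      show ?thesis using that unfolding binomial_fact[OF that] tk
        by (simp add: power_mult_distrib field_simps)
    qed
    then show "(\<Sum>i\<le>k. t ^ i / fact i * b i * ((c * t) ^ (k - i) / fact (k - i))) = t ^ k / fact k * a k"
      by (simp add: ab sum_distrib_left)
  qed
  finally show ?thesis by simp
qed


lemma sum_split2: "(\<Sum>j<2*n. f j) = (\<Sum>l<n. f (2*l) + f (2*l+1 :: nat)) " for f :: "nat \<Rightarrow> real"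
  by (induction n) (auto simp: sum.distrib)

definition Dv :: "nat \<Rightarrow> real vec \<Rightarrow> real vec" where
  "Dv n z = vec n (\<lambda>l. z $ (2*l) - z $ (2*l+1))"

lemma itv_smult: "M \<in> carrier_mat m m \<Longrightarrow> x \<in> carrier_vec m \<Longrightarrow> itv M k (c \<cdot>\<^sub>v x) = c \<cdot>\<^sub>v itv M k x"
  by (induction k) (auto simp: itv_Suc mult_mat_vec[OF _ itv_carrier])

lemma P2_entry:
  assumes A: "A \<in> carrier_mat n n" and i: "i < 2*n" and j: "j < 2*n"
  shows "P2_of A $$ (i,j) = (if i mod 2 = j mod 2 then max (A $$ (i div 2, j div 2)) 0
              else max (- A $$ (i div 2, j div 2)) 0) - (if i = j then lam A else 0)"
  using A i j by (auto simp: P2_of_def phi1_def)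

lemma P2_carrier: "A \<in> carrier_mat n n \<Longrightarrow> P2_of A \<in> carrier_mat (2*n) (2*n)"
  by (auto simp: P2_of_def phi1_def)

lemma D_lemma:
  assumes A: "A \<in> carrier_mat n n" and z: "z \<in> carrier_vec (2*n)"
  shows "Dv n (P2_of A *\<^sub>v z) = (A - lam A \<cdot>\<^sub>m 1\<^sub>m n) *\<^sub>v Dv n z"
proof (rule eq_vecI)
  show "dim_vec (Dv n (P2_of A *\<^sub>v z)) = dim_vec ((A - lam A \<cdot>\<^sub>m 1\<^sub>m n) *\<^sub>v Dv n z)"
    using A by (simp add: Dv_def)
  fix r assume "r < dim_vec ((A - lam A \<cdot>\<^sub>m 1\<^sub>m n) *\<^sub>v Dv n z)"
  then have r: "r < n" using A by simp
  have P2c: "P2_of A \<in> carrier_mat (2*n) (2*n)" using P2_carrier[OF A] .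
  have Mc: "A - lam A \<cdot>\<^sub>m 1\<^sub>m n \<in> carrier_mat n n" using A by auto
  have "Dv n (P2_of A *\<^sub>v z) $ r = (P2_of A *\<^sub>v z) $ (2*r) - (P2_of A *\<^sub>v z) $ (2*r+1)"
    using r by (simp add: Dv_def)
  also have "\<dots> = (\<Sum>j<2*n. (P2_of A $$ (2*r,j) - P2_of A $$ (2*r+1,j)) * z $ j)"
    using r mult_entry[OF P2c z, of "2*r"] mult_entry[OF P2c z, of "2*r+1"]
    by (simp add: sum_subtractf[symmetric] algebra_simps)
  also have "\<dots> = (\<Sum>l<n. (A - lam A \<cdot>\<^sub>m 1\<^sub>m n) $$ (r,l) * (Dv n z) $ l)"
    unfolding sum_split2
  proof (intro sum.cong refl)
    fix l assume l: "l \<in> {..<n}"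
    then have l: "l < n" by simp
    have par: "Suc (2*r) \<noteq> 2*l" "2*r \<noteq> Suc (2*l)" by presburger+
    have e1: "P2_of A $$ (2*r,2*l) - P2_of A $$ (2*r+1,2*l) = A $$ (r,l) - (if r = l then lam A else 0)"
      using r l par by (simp add: P2_entry[OF A] max_def)
    have e2: "P2_of A $$ (2*r,2*l+1) - P2_of A $$ (2*r+1,2*l+1) = - (A $$ (r,l) - (if r = l then lam A else 0))"
      using r l par by (simp add: P2_entry[OF A] max_def)
    show "(P2_of A $$ (2*r,2*l) - P2_of A $$ (2*r+1,2*l)) * z $ (2*l) +
          (P2_of A $$ (2*r,2*l+1) - P2_of A $$ (2*r+1,2*l+1)) * z $ (2*l+1)
        = (A - lam A \<cdot>\<^sub>m 1\<^sub>m n) $$ (r,l) * (Dv n z) $ l"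
      unfolding e1 e2 using r l A by (simp add: Dv_def algebra_simps)
  qed
  also have "\<dots> = ((A - lam A \<cdot>\<^sub>m 1\<^sub>m n) *\<^sub>v Dv n z) $ r"
    using mult_entry[OF Mc _ r, of "Dv n z"] by (simp add: Dv_def)
  finally show "Dv n (P2_of A *\<^sub>v z) $ r = ((A - lam A \<cdot>\<^sub>m 1\<^sub>m n) *\<^sub>v Dv n z) $ r" .
qed


definition wv :: "real mat \<Rightarrow> real vec \<Rightarrow> real vec" where
  "wv A X0 = vec (2 * dim_vec X0) (\<lambda>i. ((P2_of A *\<^sub>v phi2 X0) $ i + beta_of A X0 $ i) / gamma_of A X0)"

lemma P_entry:
  assumes "X0 \<in> carrier_vec n" "i < 2*n+1" "j < 2*n+1"
  shows "P_of A X0 $$ (i,j) = (if i < 2*n \<and> j < 2*n then P2_of A $$ (i,j)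
        else if i < 2*n \<and> j = 2*n then wv A X0 $ i else 0)"
  using assms by (simp add: P_of_def wv_def Let_def)

lemma P_carrier: "X0 \<in> carrier_vec n \<Longrightarrow> P_of A X0 \<in> carrier_mat (2*n+1) (2*n+1)"
  by (simp add: P_of_def Let_def)

lemma V_lemma:
  assumes A: "A \<in> carrier_mat n n" and X: "X0 \<in> carrier_vec n"
  shows "itv (P_of A X0) (Suc k) (Y0_of n) = vec (2*n+1) (\<lambda>i. if i < 2*n then itv (P2_of A) k (wv A X0) $ i else 0)"
proof (induction k)
  have Pc: "P_of A X0 \<in> carrier_mat (2*n+1) (2*n+1)" using P_carrier[OF X] .
  have wc: "wv A X0 \<in> carrier_vec (2*n)" using X by (simp add: wv_def)
  have P2c: "P2_of A \<in> carrier_mat (2*n) (2*n)" using P2_carrier[OF A] .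
  {
    case 0
    show ?case
    proof (rule eq_vecI)
      fix i assume "i < dim_vec (vec (2*n+1) (\<lambda>i. if i < 2*n then itv (P2_of A) 0 (wv A X0) $ i else 0))"
      then have i: "i < 2*n+1" by simp
      have "itv (P_of A X0) (Suc 0) (Y0_of n) $ i = (\<Sum>j<2*n+1. P_of A X0 $$ (i,j) * Y0_of n $ j)"
        unfolding itv_Suc itv_0 by (rule mult_entry[OF Pc _ i]) (simp add: Y0_of_def)
      also have "\<dots> = (\<Sum>j<2*n+1. if j = 2*n then P_of A X0 $$ (i,j) else 0)"
        by (intro sum.cong refl) (auto simp: Y0_of_def)
      also have "\<dots> = P_of A X0 $$ (i,2*n)" by (simp add: sum.delta)
      finally show "itv (P_of A X0) (Suc 0) (Y0_of n) $ i = vec (2*n+1) (\<lambda>i. if i < 2*n then itv (P2_of A) 0 (wv A X0) $ i else 0) $ i"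
        using i X by (simp add: P_entry)
    qed (use Pc in \<open>simp add: itv_Suc Y0_of_def\<close>)
  next
    case (Suc k)
    show ?case
    proof (rule eq_vecI)
      fix i assume "i < dim_vec (vec (2*n+1) (\<lambda>i. if i < 2*n then itv (P2_of A) (Suc k) (wv A X0) $ i else 0))"
      then have i: "i < 2*n+1" by simp
      have "itv (P_of A X0) (Suc (Suc k)) (Y0_of n) $ i = (\<Sum>j<2*n+1. P_of A X0 $$ (i,j) *
              (if j < 2*n then itv (P2_of A) k (wv A X0) $ j else 0))"
        unfolding itv_Suc[of _ "Suc k"] Suc by (subst mult_entry[OF Pc _ i]) auto
      also have "\<dots> = (\<Sum>j<2*n. P_of A X0 $$ (i,j) * itv (P2_of A) k (wv A X0) $ j)"
        by simp
      also have "\<dots> = (if i < 2*n then (\<Sum>j<2*n. P2_of A $$ (i,j) * itv (P2_of A) k (wv A X0) $ j) else 0)"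
        using i X by (auto simp: P_entry intro!: sum.cong)
      also have "\<dots> = vec (2*n+1) (\<lambda>i. if i < 2*n then itv (P2_of A) (Suc k) (wv A X0) $ i else 0) $ i"
        using i mult_entry[OF P2c itv_carrier[OF P2c wc], of i k] by (simp add: itv_Suc)
      finally show "itv (P_of A X0) (Suc (Suc k)) (Y0_of n) $ i = vec (2*n+1) (\<lambda>i. if i < 2*n then itv (P2_of A) (Suc k) (wv A X0) $ i else 0) $ i" .
    qed (use Pc in \<open>simp add: itv_Suc itv_carrier[OF Pc] Y0_of_def\<close>)
  }
qed


lemma DU_lemma:
  assumes A: "A \<in> carrier_mat n n" and that: "z \<in> carrier_vec (2*n)"
  shows "Dv n (itv (P2_of A) k z) = itv (A - lam A \<cdot>\<^sub>m 1\<^sub>m n) k (Dv n z)"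
proof (induction k)
  case 0 then show ?case by simp
next
  case (Suc k)
  have P2c: "P2_of A \<in> carrier_mat (2*n) (2*n)" using P2_carrier[OF A] .
  show ?case unfolding itv_Suc D_lemma[OF A itv_carrier[OF P2c that]] Suc ..
qed

lemma Dw_lemma:
  assumes A: "A \<in> carrier_mat n n" and X: "X0 \<in> carrier_vec n"
  shows "Dv n (wv A X0) = (1 / gamma_of A X0) \<cdot>\<^sub>v ((A - lam A \<cdot>\<^sub>m 1\<^sub>m n) *\<^sub>v X0)"
proof -
  have Y2: "phi2 X0 \<in> carrier_vec (2*n)" using X by (simp add: phi2_def)
  have DY: "Dv n (phi2 X0) = X0" using X by (auto simp: Dv_def phi2_def)
  define v where "v = P2_of A *\<^sub>v phi2 X0"
  have Dv: "Dv n v = (A - lam A \<cdot>\<^sub>m 1\<^sub>m n) *\<^sub>v X0" unfolding v_def D_lemma[OF A Y2] DY ..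
  show ?thesis
  proof (rule eq_vecI)
    fix r assume "r < dim_vec ((1 / gamma_of A X0) \<cdot>\<^sub>v ((A - lam A \<cdot>\<^sub>m 1\<^sub>m n) *\<^sub>v X0))"
    then have r: "r < n" using A by simp
    have b: "beta_of A X0 $ (2*r) = beta_of A X0 $ (2*r+1)" using r X by (simp add: beta_of_def Let_def)
    have "Dv n (wv A X0) $ r = (v $ (2*r) - v $ (2*r+1)) / gamma_of A X0"
      using r X b by (simp add: Dv_def wv_def v_def diff_divide_distrib add_divide_distrib)
    also have "v $ (2*r) - v $ (2*r+1) = Dv n v $ r" using r by (simp add: Dv_def)
    finally show "Dv n (wv A X0) $ r = ((1 / gamma_of A X0) \<cdot>\<^sub>v ((A - lam A \<cdot>\<^sub>m 1\<^sub>m n) *\<^sub>v X0)) $ r"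
      using r A unfolding Dv by simp
  qed (use A in \<open>simp add: Dv_def\<close>)
qed

lemma diff_lemma:
  assumes A: "A \<in> carrier_mat n n" and X: "X0 \<in> carrier_vec n" and n: "n \<ge> 1" and X00: "X0 $ 0 = 0"
  shows "itv (P_of A X0) k (Y0_of n) $ 0 - itv (P_of A X0) k (Y0_of n) $ 1
       = (1 / gamma_of A X0) * itv (A - lam A \<cdot>\<^sub>m 1\<^sub>m n) k X0 $ 0"
proof (cases k)
  case 0 then show ?thesis using n X00 by (simp add: Y0_of_def)
next
  case (Suc k')
  define M where "M = A - lam A \<cdot>\<^sub>m 1\<^sub>m n"
  have Mc: "M \<in> carrier_mat n n" using A by (auto simp: M_def)
  have wc: "wv A X0 \<in> carrier_vec (2*n)" using X by (simp add: wv_def)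
  have "itv (P_of A X0) k (Y0_of n) $ 0 - itv (P_of A X0) k (Y0_of n) $ 1
     = Dv n (itv (P2_of A) k' (wv A X0)) $ 0"
    unfolding Suc V_lemma[OF A X] using n by (simp add: Dv_def)
  also have "\<dots> = itv M k' ((1 / gamma_of A X0) \<cdot>\<^sub>v (M *\<^sub>v X0)) $ 0"
    unfolding DU_lemma[OF A wc] Dw_lemma[OF A X] M_def ..
  also have "\<dots> = (1 / gamma_of A X0) * itv M k X0 $ 0"
    unfolding itv_smult[OF Mc mult_mat_vec_carrier[OF Mc X]] Suc itv_Suc'
    using n itv_carrier[OF Mc mult_mat_vec_carrier[OF Mc X], of k'] by simp
  finally show ?thesis by (simp add: M_def)
qed


lemma beta_ge:
  assumes X: "X0 \<in> carrier_vec n" and i: "i < 2*n"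
  shows "(P2_of A *\<^sub>v phi2 X0) $ i + beta_of A X0 $ i \<ge> 0"
proof -
  have "i = 2 * (i div 2) \<or> i = 2 * (i div 2) + 1" by presburger
  then show ?thesis using X i by (auto simp: beta_of_def Let_def)
qed

lemma gamma_ge:
  assumes X: "X0 \<in> carrier_vec n" and i: "i < 2*n"
  shows "(P2_of A *\<^sub>v phi2 X0) $ i + beta_of A X0 $ i \<le> gamma_of A X0"
  unfolding gamma_of_def Let_def using X i by (intro Max_ge) auto

lemma row_le:
  assumes A: "A \<in> carrier_mat n n" and i: "i < 2*n"
  shows "(\<Sum>j<2*n. P2_of A $$ (i,j)) \<le> -1"
proof -
  have id: "i div 2 < n" using i by simp
  have "(\<Sum>j<2*n. P2_of A $$ (i,j)) = (\<Sum>l<n. P2_of A $$ (i,2*l) + P2_of A $$ (i,2*l+1))"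
    by (rule sum_split2)
  also have "\<dots> = (\<Sum>l<n. \<bar>A $$ (i div 2, l)\<bar> - (if i div 2 = l then lam A else 0))"
  proof (intro sum.cong refl)
    fix l assume "l \<in> {..<n}"
    then have l: "l < n" by simp
    have "i = 2 * l \<or> i = 2*l+1 \<or> i div 2 \<noteq> l" by presburger
    moreover have "i mod 2 = 0 \<or> i mod 2 = 1" by presburger
    ultimately show "P2_of A $$ (i,2*l) + P2_of A $$ (i,2*l+1) = \<bar>A $$ (i div 2, l)\<bar> - (if i div 2 = l then lam A else 0)"
      using i l by (auto simp: P2_entry[OF A] max_def)
  qed
  also have "\<dots> = (\<Sum>l<n. \<bar>A $$ (i div 2, l)\<bar>) - lam A"
    using id by (simp add: sum_subtractf)
  also have "(\<Sum>l<n. \<bar>A $$ (i div 2, l)\<bar>) \<le> lam A - 1"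
    unfolding lam_def using A id by (auto intro!: Max_ge)
  finally show ?thesis by simp
qed


theorem mainTheorem5:
  fixes A :: "real mat" and X0 :: "real vec" and n :: nat
  assumes "n \<ge> 1"
    and "A \<in> carrier_mat n n" and "X0 \<in> carrier_vec n"
    and "\<forall>i<n. \<forall>j<n. A $$ (i,j) \<in> \<rat>"
    and "\<forall>i<n. X0 $ i \<in> \<rat>"
    and "X0 $ 0 = 0"
    and "gamma_of A X0 > 0"
  shows "(\<forall>t::real. (mat_exp A t *\<^sub>v X0) $ 0 =
           gamma_of A X0 * exp (lam A * t) *
           ((mat_exp (P_of A X0) t *\<^sub>v Y0_of n) $ 0 - (mat_exp (P_of A X0) t *\<^sub>v Y0_of n) $ 1))
       \<and> (\<forall>i < 2*n+1. \<forall>j < 2*n+1. i \<noteq> j \<longrightarrow> P_of A X0 $$ (i,j) \<ge> 0)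
       \<and> (\<forall>i < 2*n+1. (\<Sum>j<2*n+1. P_of A X0 $$ (i,j)) \<le> 0)"
proof (intro conjI allI impI)
  note n = assms(1) and A = assms(2) and X = assms(3) and X00 = assms(6) and g = assms(7)
  have Pc: "P_of A X0 \<in> carrier_mat (2*n+1) (2*n+1)" using P_carrier[OF X] .
  have Yc: "Y0_of n \<in> carrier_vec (2*n+1)" by (simp add: Y0_of_def)
  {
    fix t :: real
    define M where "M = A - lam A \<cdot>\<^sub>m 1\<^sub>m n"
    have Mc: "M \<in> carrier_mat n n" using A by (auto simp: M_def)
    define a where "a k = itv A k X0 $ 0" for k
    define b where "b k = itv M k X0 $ 0" for k
    define g where "g = gamma_of A X0"
    define V where "V k = itv (P_of A X0) k (Y0_of n)" for k
    have ab: "a k = (\<Sum>i\<le>k. of_nat (k choose i) * lam A ^ (k - i) * b i)" for k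
      unfolding a_def b_def by (rule binom_itv[OF M_def A X]) (use n in simp)
    have sb: "summable (\<lambda>k. norm (t ^ k / fact k * b k))"
      unfolding b_def by (rule summable_itv[OF Mc X]) (use n in simp)
    have L: "(mat_exp A t *\<^sub>v X0) $ 0 = (\<Sum>k. t ^ k / fact k * a k)"
      unfolding a_def by (rule mat_exp_vec[OF A X]) (use n in simp)
    have R0: "(mat_exp (P_of A X0) t *\<^sub>v Y0_of n) $ 0 = (\<Sum>k. t ^ k / fact k * V k $ 0)"
      unfolding V_def by (rule mat_exp_vec[OF Pc Yc]) simp
    have R1: "(mat_exp (P_of A X0) t *\<^sub>v Y0_of n) $ 1 = (\<Sum>k. t ^ k / fact k * V k $ 1)"
      unfolding V_def by (rule mat_exp_vec[OF Pc Yc]) (use n in simp)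
    have s0: "summable (\<lambda>k. t ^ k / fact k * V k $ 0)"
      unfolding V_def by (rule summable_norm_cancel, rule summable_itv[OF Pc Yc]) simp
    have s1: "summable (\<lambda>k. t ^ k / fact k * V k $ 1)"
      unfolding V_def by (rule summable_norm_cancel, rule summable_itv[OF Pc Yc]) (use n in simp)
    have "(mat_exp (P_of A X0) t *\<^sub>v Y0_of n) $ 0 - (mat_exp (P_of A X0) t *\<^sub>v Y0_of n) $ 1
        = (\<Sum>k. t ^ k / fact k * V k $ 0 - t ^ k / fact k * V k $ 1)"
      unfolding R0 R1 by (rule suminf_diff[OF s0 s1])
    also have "\<dots> = (\<Sum>k. t ^ k / fact k * b k * (1 / g))"
    proof (rule suminf_cong)
      fix k
      have "V k $ 0 - V k $ 1 = (1 / g) * b k"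
        unfolding V_def b_def g_def M_def by (rule diff_lemma[OF A X n X00])
      then show "t ^ k / fact k * V k $ 0 - t ^ k / fact k * V k $ 1 = t ^ k / fact k * b k * (1 / g)"
      proof -
        have "t ^ k / fact k * V k $ 0 - t ^ k / fact k * V k $ 1 = t ^ k / fact k * (V k $ 0 - V k $ 1)"
          by (simp add: algebra_simps)
        with \<open>V k $ 0 - V k $ 1 = (1 / g) * b k\<close> show ?thesis by simp
      qed
    qed
    also have "\<dots> = (\<Sum>k. t ^ k / fact k * b k) * (1 / g)"
      by (rule suminf_mult2[symmetric]) (rule summable_norm_cancel[OF sb])
    finally have RR: "(mat_exp (P_of A X0) t *\<^sub>v Y0_of n) $ 0 - (mat_exp (P_of A X0) t *\<^sub>v Y0_of n) $ 1
        = (\<Sum>k. t ^ k / fact k * b k) * (1 / g)" .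
    have "(mat_exp A t *\<^sub>v X0) $ 0 = (\<Sum>k. t ^ k / fact k * b k) * exp (lam A * t)"
      unfolding L by (rule shift_series[OF ab sb])
    then show "(mat_exp A t *\<^sub>v X0) $ 0 = gamma_of A X0 * exp (lam A * t) *
           ((mat_exp (P_of A X0) t *\<^sub>v Y0_of n) $ 0 - (mat_exp (P_of A X0) t *\<^sub>v Y0_of n) $ 1)"
      unfolding RR using g by (simp add: g_def field_simps)
  }
  {
    fix i j assume i: "i < 2*n+1" and j: "j < 2*n+1" and ij: "i \<noteq> j"
    show "P_of A X0 $$ (i,j) \<ge> 0"
      using i j ij beta_ge[OF X, of i A] g A X
      by (auto simp: P_entry[OF X] P2_entry[OF A] wv_def)
  }
  {
    fix i assume i: "i < 2*n+1"
    show "(\<Sum>j<2*n+1. P_of A X0 $$ (i,j)) \<le> 0"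
    proof (cases "i < 2*n")
      case True
      have "(\<Sum>j<2*n+1. P_of A X0 $$ (i,j)) = (\<Sum>j<2*n. P2_of A $$ (i,j)) + wv A X0 $ i"
        using True X by (simp add: P_entry)
      also have "wv A X0 $ i \<le> 1"
        using True X gamma_ge[OF X True, of A] g by (simp add: wv_def)
      finally show ?thesis using row_le[OF A True] by simp
    next
      case False
      then show ?thesis using i X by (simp add: P_entry)
    qed
  }
qed

end
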